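(* Let $\mathcal A,\mathcal B>0$, $\alpha,\beta\in(0,1)$, $h,\tau>0$, $N\ge1$, and assume $$\frac{\tau^{\alpha}(-\alpha^2+4\alpha-2)\mathcal A+\tau^{\beta}(-\beta^2+4\beta-2)\mathcal B}{h^2}\le\frac{279}{952}.$$ Fix a real $\theta$, let $s=\sin^2(\theta h/2)$, and let $\widetilde\xi_0\in\mathbb C$ and $\widetilde\xi_1,\dots,\widetilde\xi_N$ be defined by $$\widetilde{\mathcal Q}\,\widetilde\xi_{k+1}=\widetilde{\mathcal P}\,\widetilde\xi_k-4s\Big[1+\tfrac13 s+\tfrac8{45}s^2\Big]\sum_{\ell=2}^{k+1}g_\ell^{(\alpha,\beta)}\widetilde\xi_{k+1-\ell},\qquad k=0,\dots,N-1,$$ where $\widetilde{\mathcal Q}=[1-\frac{4}{35}s^3]+4g_0^{(\alpha,\beta)}s[1+\frac13 s+\frac8{45}s^2]$ and $\widetilde{\mathcal P}=[1-\frac{4}{35}s^3]-4g_1^{(\alpha,\beta)}s[1+\frac13 s+\frac8{45}s^2]$. Then $|\widetilde\xi_{k+1}|\le|\widetilde\xi_0|$ for $k=0,1,\dots,N-1$.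
   Context: $\varpi_\ell^{(\sigma)}=(-1)^\ell\binom{\sigma}{\ell}$, $g_0^{(\sigma)}=\frac{1+\sigma}{2}\varpi_0^{(\sigma)}$, $g_\ell^{(\sigma)}=\frac{1+\sigma}{2}\varpi_\ell^{(\sigma)}+\frac{1-\sigma}{2}\varpi_{\ell-1}^{(\sigma)}$ ($\ell\ge1$); $\mu_\alpha=\tau^\alpha\mathcal A/h^2$, $\mu_\beta=\tau^\beta\mathcal B/h^2$, $g_\ell^{(\alpha,\beta)}=\mu_\alpha g_\ell^{(1-\alpha)}+\mu_\beta g_\ell^{(1-\beta)}$. The sum is empty for $k=0$. *)

theory Defs
  imports Complex_Main
begin

definition varpi :: "real \<Rightarrow> nat \<Rightarrow> real" where
  "varpi \<sigma> l = (-1) ^ l * (\<sigma> gchoose l)"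

definition gcoef :: "real \<Rightarrow> nat \<Rightarrow> real" where
  "gcoef \<sigma> l = (if l = 0 then (1 + \<sigma>) / 2 * varpi \<sigma> 0
     else (1 + \<sigma>) / 2 * varpi \<sigma> l + (1 - \<sigma>) / 2 * varpi \<sigma> (l - 1))"

definition gab :: "real \<Rightarrow> real \<Rightarrow> real \<Rightarrow> real \<Rightarrow> real \<Rightarrow> real \<Rightarrow> nat \<Rightarrow> real" where
  "gab A B \<alpha> \<beta> h \<tau> l =
     (\<tau> powr \<alpha> * A / h^2) * gcoef (1 - \<alpha>) l + (\<tau> powr \<beta> * B / h^2) * gcoef (1 - \<beta>) l"

end

theory Submission imports Defs begin

lemma varpi_step: "real (Suc k) * varpi \<sigma> (Suc k) = varpi \<sigma> k * (real k - \<sigma>)"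
proof -
  have "\<sigma> * (\<sigma> gchoose k) = real k * (\<sigma> gchoose k) + real (Suc k) * (\<sigma> gchoose Suc k)"
    by (rule gbinomial_mult_1)
  then have "(-1)^k * (\<sigma> * (\<sigma> gchoose k)) = (-1)^k * (real k * (\<sigma> gchoose k) + real (Suc k) * (\<sigma> gchoose Suc k))"
    by simp
  then show ?thesis unfolding varpi_def by (simp add: algebra_simps)
qed

lemma varpi_S:
  assumes "0 < \<sigma>" "\<sigma> < 1"
  shows "(\<Sum>l\<le>n. varpi \<sigma> l) > 0 \<and> varpi \<sigma> (Suc n) = - (\<sigma> / real (Suc n)) * (\<Sum>l\<le>n. varpi \<sigma> l)"
proof (induction n)
  case 0
  have "1 * varpi \<sigma> 1 = varpi \<sigma> 0 * (0 - \<sigma>)" using varpi_step[of 0 \<sigma>] by simp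
  then show ?case by (simp add: varpi_def)
next
  case (Suc n)
  let ?S = "\<Sum>l\<le>n. varpi \<sigma> l"
  have S1: "(\<Sum>l\<le>Suc n. varpi \<sigma> l) = ?S * (1 - \<sigma> / real (Suc n))"
    using Suc by (simp add: algebra_simps)
  have pos: "1 - \<sigma> / real (Suc n) > 0" using assms by (simp add: field_simps)
  have "real (Suc (Suc n)) * varpi \<sigma> (Suc (Suc n)) = varpi \<sigma> (Suc n) * (real (Suc n) - \<sigma>)"
    by (rule varpi_step)
  hence "varpi \<sigma> (Suc (Suc n)) = varpi \<sigma> (Suc n) * (real (Suc n) - \<sigma>) / real (Suc (Suc n))"
    by (simp add: field_simps del: of_nat_Suc)
  also have "\<dots> = - (\<sigma> / real (Suc (Suc n))) * (?S * (1 - \<sigma> / real (Suc n)))"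
    using Suc by (simp add: field_simps del: of_nat_Suc)
  finally show ?case using S1 pos Suc by (simp del: of_nat_Suc)
qed

lemma varpi_neg: "0 < \<sigma> \<Longrightarrow> \<sigma> < 1 \<Longrightarrow> l \<ge> 1 \<Longrightarrow> varpi \<sigma> l \<le> 0"
proof -
  assume a: "0 < \<sigma>" "\<sigma> < 1" "l \<ge> 1"
  then obtain n where "l = Suc n" by (cases l) auto
  with varpi_S[OF a(1,2), of n] a show ?thesis
    by (simp del: of_nat_Suc)
qed

lemma gcoef_neg: "0 < \<sigma> \<Longrightarrow> \<sigma> < 1 \<Longrightarrow> l \<ge> 2 \<Longrightarrow> gcoef \<sigma> l \<le> 0"
  unfolding gcoef_def using varpi_neg[of \<sigma> l] varpi_neg[of \<sigma> "l-1"]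
  by (simp add: add_nonpos_nonpos mult_nonneg_nonpos)

lemma gcoef_sum: "0 < \<sigma> \<Longrightarrow> \<sigma> < 1 \<Longrightarrow> (\<Sum>l\<le>n. gcoef \<sigma> l) \<ge> 0"
proof (cases n)
  case 0
  assume "0 < \<sigma>" "\<sigma> < 1" then show ?thesis using 0 by (simp add: gcoef_def varpi_def)
next
  case (Suc m)
  assume a: "0 < \<sigma>" "\<sigma> < 1"
  have "(\<Sum>l\<le>Suc m. gcoef \<sigma> l) = (1 + \<sigma>) / 2 * (\<Sum>l\<le>Suc m. varpi \<sigma> l) + (1 - \<sigma>) / 2 * (\<Sum>l\<le>m. varpi \<sigma> l)"
    by (induction m) (simp_all add: gcoef_def algebra_simps)
  moreover have "(\<Sum>l\<le>Suc m. varpi \<sigma> l) > 0" "(\<Sum>l\<le>m. varpi \<sigma> l) > 0"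
    using varpi_S[OF a] by blast+
  ultimately show ?thesis using a Suc by simp
qed


lemma poly_ineq: "0 \<le> s \<Longrightarrow> s \<le> (1::real) \<Longrightarrow>
   4 * s * (1 + s / 3 + 8 / 45 * s^2) * (279/1904) \<le> 1 - 4 / 35 * s^3"
proof -
  assume a: "0 \<le> s" "s \<le> 1"
  have "s^2 \<le> 1" "s^3 \<le> 1" using a by (simp_all add: power_le_one)
  then show ?thesis using a by (simp add: algebra_simps power2_eq_square power3_eq_cube) 
qed

theorem lemma10:
  fixes A B \<alpha> \<beta> h \<tau> \<theta> :: real and N :: nat and \<xi> :: "nat \<Rightarrow> complex"
  assumes "A > 0" "B > 0" "0 < \<alpha>" "\<alpha> < 1" "0 < \<beta>" "\<beta> < 1" "h > 0" "\<tau> > 0" "N \<ge> 1"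
    and "(\<tau> powr \<alpha> * (- (\<alpha>^2) + 4*\<alpha> - 2) * A + \<tau> powr \<beta> * (- (\<beta>^2) + 4*\<beta> - 2) * B) / h^2
           \<le> 279 / 952"
    and rec: "\<And>k. k < N \<Longrightarrow>
      let s = (sin (\<theta> * h / 2))^2;
          F = 1 + s / 3 + 8 / 45 * s^2;
          Q = (1 - 4 / 35 * s^3) + 4 * gab A B \<alpha> \<beta> h \<tau> 0 * s * F;
          P = (1 - 4 / 35 * s^3) - 4 * gab A B \<alpha> \<beta> h \<tau> 1 * s * F
      in complex_of_real Q * \<xi> (k + 1) =
           complex_of_real P * \<xi> k
           - complex_of_real (4 * s * F) *
               (\<Sum>l = 2..k + 1. complex_of_real (gab A B \<alpha> \<beta> h \<tau> l) * \<xi> (k + 1 - l))"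
  shows "\<forall>k < N. cmod (\<xi> (k + 1)) \<le> cmod (\<xi> 0)"
proof -
  define g where "g = gab A B \<alpha> \<beta> h \<tau>"
  define s where "s = (sin (\<theta> * h / 2))^2"
  define F where "F = 1 + s / 3 + 8 / 45 * s^2"
  define E where "E = 1 - 4 / 35 * s^3"
  define c where "c = 4 * s * F"
  define Q where "Q = E + 4 * g 0 * s * F"
  define P where "P = E - 4 * g 1 * s * F"
  have Qc: "Q = E + g 0 * c" unfolding Q_def c_def by simp
  have Pc: "P = E - g 1 * c" unfolding P_def c_def by simp
  have s01: "0 \<le> s" "s \<le> 1" unfolding s_def by (simp_all add: abs_square_le_1)
  have "s^3 \<le> 1" using s01 by (simp add: power_le_one)
  hence Epos: "E > 0" unfolding E_def by simp
  have c0: "c \<ge> 0" unfolding c_def F_def using s01 by simp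
  define ma where "ma = \<tau> powr \<alpha> * A / h^2"
  define mb where "mb = \<tau> powr \<beta> * B / h^2"
  have ma: "ma > 0" unfolding ma_def using assms by simp
  have mb: "mb > 0" unfolding mb_def using assms by simp
  have gdef: "\<And>l. g l = ma * gcoef (1-\<alpha>) l + mb * gcoef (1-\<beta>) l"
    unfolding g_def gab_def ma_def mb_def by simp
  have "ma*(2-\<alpha>)/2 > 0" "mb*(2-\<beta>)/2 > 0" using ma mb assms(3-6) by simp_all
  hence g0: "g 0 > 0" unfolding gdef by (simp add: gcoef_def varpi_def)
  have gneg: "\<And>l. l \<ge> 2 \<Longrightarrow> g l \<le> 0"
    unfolding gdef using gcoef_neg[of "1-\<alpha>"] gcoef_neg[of "1-\<beta>"] ma mb assms
    by (simp add: add_nonpos_nonpos mult_nonneg_nonpos)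
  have gsum: "\<And>n. (\<Sum>l\<le>n. g l) \<ge> 0"
    unfolding gdef sum.distrib sum_distrib_left[symmetric]
    using gcoef_sum[of "1-\<alpha>"] gcoef_sum[of "1-\<beta>"] ma mb assms by simp
  have gc1: "\<And>x. gcoef x 1 = (1 + x) / 2 * (-x) + (1 - x)/2" by (simp add: gcoef_def varpi_def)
  have g1: "g 1 \<le> 279/1904"
  proof -
    define T where "T = (\<tau> powr \<alpha> * (- (\<alpha>^2) + 4*\<alpha> - 2) * A + \<tau> powr \<beta> * (- (\<beta>^2) + 4*\<beta> - 2) * B) / h^2"
    have T: "T \<le> 279/952" using assms(10) unfolding T_def .
    have "g 1 = (\<tau> powr \<alpha> * (- (\<alpha>^2) + 4*\<alpha> - 2) * A + \<tau> powr \<beta> * (- (\<beta>^2) + 4*\<beta> - 2) * B) / h^2 / 2"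
      unfolding gdef gc1 ma_def mb_def using assms(7) by (simp add: field_simps power2_eq_square)
    then have "g 1 = T / 2" unfolding T_def by simp
    then show ?thesis using T by linarith
  qed
  have Qpos: "Q > 0" unfolding Qc using Epos g0 c0 by (simp add: add_pos_nonneg)
  have key: "\<bar>P\<bar> + c * (g 0 + g 1) \<le> Q"
  proof (cases "P \<ge> 0")
    case True then show ?thesis unfolding Pc Qc by (simp add: algebra_simps)
  next
    case False
    have "g 1 > 0"
    proof (rule ccontr)
      assume "\<not> g 1 > 0" then have "g 1 * c \<le> 0" using c0 by (simp add: mult_nonpos_nonneg)
      then show False using False Epos unfolding Pc by simp
    qed
    have "c * g 1 \<le> c * (279/1904)" using mult_left_mono[OF g1 c0] .
    also have "\<dots> \<le> E" using poly_ineq[OF s01] unfolding c_def F_def E_def by simp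
    finally show ?thesis using False unfolding Pc Qc by (simp add: algebra_simps)
  qed
  have main: "j \<le> N \<Longrightarrow> cmod (\<xi> j) \<le> cmod (\<xi> 0)" for j
  proof (induction j rule: less_induct)
    case (less j)
    show ?case
    proof (cases j)
      case 0 then show ?thesis by simp
    next
      case (Suc k)
      with less.prems have kN: "k < N" by simp
      let ?M = "cmod (\<xi> 0)"
      have IH: "\<And>i. i \<le> k \<Longrightarrow> cmod (\<xi> i) \<le> ?M" using less.IH Suc kN by simp
      have eq: "complex_of_real Q * \<xi> (k + 1) = complex_of_real P * \<xi> k
           - complex_of_real c * (\<Sum>l = 2..k + 1. complex_of_real (g l) * \<xi> (k + 1 - l))"
        using rec[OF kN] unfolding Let_def Q_def P_def E_def c_def F_def s_def g_def .
      have "Q * cmod (\<xi> (k+1)) = cmod (complex_of_real Q * \<xi> (k + 1))"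
        using Qpos by (simp add: norm_mult)
      also have "\<dots> \<le> cmod (complex_of_real P * \<xi> k)
           + cmod (complex_of_real c * (\<Sum>l = 2..k + 1. complex_of_real (g l) * \<xi> (k + 1 - l)))"
        unfolding eq by (rule norm_triangle_ineq4)
      also have "\<dots> = \<bar>P\<bar> * cmod (\<xi> k) + c * cmod (\<Sum>l = 2..k + 1. complex_of_real (g l) * \<xi> (k + 1 - l))"
        using c0 by (simp add: norm_mult)
      also have "\<dots> \<le> \<bar>P\<bar> * ?M + c * (\<Sum>l = 2..k + 1. (- g l) * ?M)"
      proof (rule add_mono)
        show "\<bar>P\<bar> * cmod (\<xi> k) \<le> \<bar>P\<bar> * ?M" using IH[of k] by (simp add: mult_left_mono)
        have "cmod (\<Sum>l = 2..k + 1. complex_of_real (g l) * \<xi> (k + 1 - l))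
              \<le> (\<Sum>l = 2..k + 1. cmod (complex_of_real (g l) * \<xi> (k + 1 - l)))"
          by (rule norm_sum)
        also have "\<dots> \<le> (\<Sum>l = 2..k + 1. (- g l) * ?M)"
        proof (rule sum_mono)
          fix l assume l: "l \<in> {2..k+1}"
          have "cmod (complex_of_real (g l) * \<xi> (k + 1 - l)) = \<bar>g l\<bar> * cmod (\<xi> (k + 1 - l))"
            by (simp add: norm_mult)
          also have "\<dots> = (- g l) * cmod (\<xi> (k + 1 - l))" using gneg[of l] l by simp
          also have "\<dots> \<le> (- g l) * ?M"
            using gneg[of l] l IH[of "k+1-l"] by (intro mult_left_mono) auto
          finally show "cmod (complex_of_real (g l) * \<xi> (k + 1 - l)) \<le> (- g l) * ?M" .
        qed
        finally show "c * cmod (\<Sum>l = 2..k + 1. complex_of_real (g l) * \<xi> (k + 1 - l))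
             \<le> c * (\<Sum>l = 2..k + 1. (- g l) * ?M)" using c0 by (simp add: mult_left_mono)
      qed
      also have "\<dots> = (\<bar>P\<bar> + c * (- (\<Sum>l = 2..k + 1. g l))) * ?M"
      proof -
        have "(\<Sum>l = 2..k + 1. (- g l) * ?M) = - (\<Sum>l = 2..k + 1. g l) * ?M"
          unfolding sum_distrib_right[symmetric] sum_negf ..
        then show ?thesis by (simp add: algebra_simps)
      qed
      also have "\<dots> \<le> (\<bar>P\<bar> + c * (g 0 + g 1)) * ?M"
      proof -
        have split: "(\<Sum>l\<le>k+1. g l) = g 0 + g 1 + (\<Sum>l = 2..k + 1. g l)"
        proof -
          have "{..k+1} = {0,1} \<union> {2..k+1}" by auto
          then show ?thesis by (simp add: sum.union_disjoint)
        qed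
        have "- (\<Sum>l = 2..k + 1. g l) \<le> g 0 + g 1" using gsum[of "k+1"] split by simp
        then show ?thesis using c0 by (intro mult_right_mono add_left_mono mult_left_mono) auto
      qed
      also have "\<dots> \<le> Q * ?M" using key by (intro mult_right_mono) auto
      finally have "Q * cmod (\<xi> (k+1)) \<le> Q * ?M" .
      then show ?thesis using Qpos Suc by simp
    qed
  qed
  show ?thesis using main by simp
qed

end
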